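(* Let $M'=M[D,K]$ be a compatible minor of the weighted uncertainty matroid $\mathcal{M}$. Let $e$ be a non-trivial element of $M'$ such that (i) $e\in B$ for some minimum-weight basis $B$ of $M'$, (ii) $w_e=U_e$, (iii) $e$ has minimum weight in $E(M')\setminus\mathrm{span}_{M'}(B\setminus\{e\})$, and (iv) $e$ has maximum query cost in $(E(M')\setminus\mathrm{span}_{M'}(B\setminus\{e\}))\cap E^U_{w_e}$. Then $M[D,K\cup\{e\}]$ is a compatible minor of $\mathcal{M}$.
   Context: A weighted uncertainty matroid $\mathcal{M}=(E,\mathcal{I},A,w)$ consists of a matroid $M=(E,\mathcal{I})$ on a finite set $E$, for each $e\in E$ a non-empty finite union $A_e$ of bounded real intervals (each open or closed), a weight $w_e\in A_e$, and a query cost $c_e\ge0$. $L_e=\inf A_e$, $U_e=\sup A_e$; $e$ is trivial if $A_e=\{w_e\}$. For a real $x$, $E^U_x=\{e\in E: U_e=x \text{ and } e \text{ non-trivial}\}$. A minimum-weight basis (MWB) is a basis minimizing total weight. A weight assignment is $w^*$ with $w^*_e\in A_e$, consistent with $Q$ if $w^*_e=w_e$ on $Q$. $Q$ verifies an MWB $B$ if for every weight assignment consistent with $Q$, $B$ is an MWB with respect to it; a certificate for $\mathcal{M}$ is a set verifying some MWB, and $c^*$ denotes the minimum cost $\sum_{e\in Q}c_e$ of a certificate for $\mathcal{M}$. For $D,K\subseteq E$, $M[D,K]$ is the matroid obtained from $M$ by deleting $D$ and contracting $K$, ground set $E(M[D,K])=E\setminus(D\cup K)$, weights restricted. $M[D,K]$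 is a compatible minor if there is a set $Q$ of cost $c^*$ verifying an MWB $B$ of $\mathcal{M}$ with $K\subseteq B$, $D\cap B=\emptyset$. $\mathrm{span}_N(X)=\{e: r_N(X\cup\{e\})=r_N(X)\}$. *)

theory Defs
  imports Complex_Main
begin

definition matroid :: "'a set \<Rightarrow> 'a set set \<Rightarrow> bool" where
  "matroid E I \<longleftrightarrow>
     finite E \<and> I \<subseteq> Pow E \<and> {} \<in> I \<and>
     (\<forall>X Y. Y \<in> I \<and> X \<subseteq> Y \<longrightarrow> X \<in> I) \<and>
     (\<forall>X Y. X \<in> I \<and> Y \<in> I \<and> card X < card Y \<longrightarrow> (\<exists>y \<in> Y - X. insert y X \<in> I))"

definition basis :: "'a set \<Rightarrow> 'a set set \<Rightarrow> 'a set \<Rightarrow> bool" where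
  "basis E I B \<longleftrightarrow> B \<in> I \<and> (\<forall>X \<in> I. B \<subseteq> X \<longrightarrow> X = B)"

definition rank :: "'a set set \<Rightarrow> 'a set \<Rightarrow> nat" where
  "rank I X = Max {card Y | Y. Y \<subseteq> X \<and> Y \<in> I}"

definition matroid_span :: "'a set \<Rightarrow> 'a set set \<Rightarrow> 'a set \<Rightarrow> 'a set" where
  "matroid_span E I X = {e \<in> E. rank I (insert e X) = rank I X}"

text \<open>The minor M[D,K]: delete D, contract K. Ground set and independent sets.\<close>
definition minor_ground :: "'a set \<Rightarrow> 'a set \<Rightarrow> 'a set \<Rightarrow> 'a set" where
  "minor_ground E D K = E - (D \<union> K)"

definition minor_indep :: "'a set \<Rightarrow> 'a set set \<Rightarrow> 'a set \<Rightarrow> 'a set \<Rightarrow> 'a set set" where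
  "minor_indep E I D K =
     {X. X \<subseteq> E - (D \<union> K) \<and> rank I (X \<union> K) = card X + rank I K}"

definition is_MWB :: "'a set \<Rightarrow> 'a set set \<Rightarrow> ('a \<Rightarrow> real) \<Rightarrow> 'a set \<Rightarrow> bool" where
  "is_MWB E I w B \<longleftrightarrow> basis E I B \<and>
     (\<forall>B'. basis E I B' \<longrightarrow> sum w B \<le> sum w B')"

definition uncertainty_area :: "real set \<Rightarrow> bool" where
  "uncertainty_area S \<longleftrightarrow> S \<noteq> {} \<and>
     (\<exists>F. finite F \<and> S = \<Union>F \<and>
          (\<forall>J \<in> F. \<exists>a b. J = {a..b} \<or> J = {a<..<b}))"

definition weighted_uncertainty_matroid ::
  "'a set \<Rightarrow> 'a set set \<Rightarrow> ('a \<Rightarrow> real set) \<Rightarrow> ('a \<Rightarrow> real) \<Rightarrow> ('a \<Rightarrow> real) \<Rightarrow> bool" where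
  "weighted_uncertainty_matroid E I A w c \<longleftrightarrow>
     matroid E I \<and>
     (\<forall>e \<in> E. uncertainty_area (A e) \<and> w e \<in> A e \<and> c e \<ge> 0)"

definition upper :: "('a \<Rightarrow> real set) \<Rightarrow> 'a \<Rightarrow> real" where
  "upper A e = Sup (A e)"

definition lower :: "('a \<Rightarrow> real set) \<Rightarrow> 'a \<Rightarrow> real" where
  "lower A e = Inf (A e)"

definition trivial :: "('a \<Rightarrow> real set) \<Rightarrow> ('a \<Rightarrow> real) \<Rightarrow> 'a \<Rightarrow> bool" where
  "trivial A w e \<longleftrightarrow> A e = {w e}"

definition EU :: "'a set \<Rightarrow> ('a \<Rightarrow> real set) \<Rightarrow> ('a \<Rightarrow> real) \<Rightarrow> real \<Rightarrow> 'a set" where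
  "EU E A w x = {e \<in> E. upper A e = x \<and> \<not> trivial A w e}"

definition weight_assignment :: "'a set \<Rightarrow> ('a \<Rightarrow> real set) \<Rightarrow> ('a \<Rightarrow> real) \<Rightarrow> bool" where
  "weight_assignment E A w' \<longleftrightarrow> (\<forall>e \<in> E. w' e \<in> A e)"

definition consistent :: "('a \<Rightarrow> real) \<Rightarrow> 'a set \<Rightarrow> ('a \<Rightarrow> real) \<Rightarrow> bool" where
  "consistent w Q w' \<longleftrightarrow> (\<forall>e \<in> Q. w' e = w e)"

definition verifies ::
  "'a set \<Rightarrow> 'a set set \<Rightarrow> ('a \<Rightarrow> real set) \<Rightarrow> ('a \<Rightarrow> real) \<Rightarrow> 'a set \<Rightarrow> 'a set \<Rightarrow> bool" where
  "verifies E I A w Q B \<longleftrightarrow>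
     (\<forall>w'. weight_assignment E A w' \<and> consistent w Q w' \<longrightarrow> is_MWB E I w' B)"

definition certificate ::
  "'a set \<Rightarrow> 'a set set \<Rightarrow> ('a \<Rightarrow> real set) \<Rightarrow> ('a \<Rightarrow> real) \<Rightarrow> 'a set \<Rightarrow> bool" where
  "certificate E I A w Q \<longleftrightarrow> Q \<subseteq> E \<and> (\<exists>B. verifies E I A w Q B)"

definition opt_cost ::
  "'a set \<Rightarrow> 'a set set \<Rightarrow> ('a \<Rightarrow> real set) \<Rightarrow> ('a \<Rightarrow> real) \<Rightarrow> ('a \<Rightarrow> real) \<Rightarrow> real" where
  "opt_cost E I A w c = Min {sum c Q | Q. certificate E I A w Q}"

definition compatible_minor ::
  "'a set \<Rightarrow> 'a set set \<Rightarrow> ('a \<Rightarrow> real set) \<Rightarrow> ('a \<Rightarrow> real) \<Rightarrow> ('a \<Rightarrow> real)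
     \<Rightarrow> 'a set \<Rightarrow> 'a set \<Rightarrow> bool" where
  "compatible_minor E I A w c D K \<longleftrightarrow> D \<subseteq> E \<and> K \<subseteq> E \<and>
     (\<exists>Q B. Q \<subseteq> E \<and> sum c Q = opt_cost E I A w c \<and> verifies E I A w Q B \<and>
            is_MWB E I w B \<and> K \<subseteq> B \<and> D \<inter> B = {})"

end

theory Submission
  imports Defs
begin


lemma rank_fin_indep:
  assumes "finite X" "X \<in> I" shows "rank I X = card X"
proof -
  let ?S = "{card Y | Y. Y \<subseteq> X \<and> Y \<in> I}"
  have fin: "finite ?S" by (rule finite_subset[of _ "{..card X}"]) (auto intro: card_mono assms)
  have in_: "card X \<in> ?S" using assms by auto
  have "\<forall>n\<in>?S. n \<le> card X" using assms by (auto intro: card_mono)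
  then show ?thesis unfolding rank_def using fin in_ by (metis (no_types, lifting) Max_eqI)
qed

lemma rank_props:
  assumes m: "matroid E I"
  shows "\<exists>Y. Y \<subseteq> X \<and> Y \<in> I \<and> card Y = rank I X"
    and "Y \<subseteq> X \<Longrightarrow> Y \<in> I \<Longrightarrow> card Y \<le> rank I X"
proof -
  let ?S = "{card Y | Y. Y \<subseteq> X \<and> Y \<in> I}"
  have fE: "finite E" and IP: "I \<subseteq> Pow E" and e: "{} \<in> I" using m unfolding matroid_def by auto
  have fin: "finite ?S"
    by (rule finite_subset[of _ "{..card E}"]) (use fE IP in \<open>auto intro: card_mono\<close>)
  have ne: "?S \<noteq> {}" using e by auto
  show "\<exists>Y. Y \<subseteq> X \<and> Y \<in> I \<and> card Y = rank I X"
    using Max_in[OF fin ne] unfolding rank_def by auto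
  show "Y \<subseteq> X \<Longrightarrow> Y \<in> I \<Longrightarrow> card Y \<le> rank I X"
    unfolding rank_def using fin by (auto intro: Max_ge)
qed

lemma matroid_fin: "matroid E I \<Longrightarrow> X \<in> I \<Longrightarrow> finite X"
  unfolding matroid_def by (meson PowD finite_subset subsetD)

lemma matroid_sub: "matroid E I \<Longrightarrow> Y \<in> I \<Longrightarrow> X \<subseteq> Y \<Longrightarrow> X \<in> I"
  unfolding matroid_def by blast

lemma matroid_aug: "matroid E I \<Longrightarrow> X \<in> I \<Longrightarrow> Y \<in> I \<Longrightarrow> card X < card Y \<Longrightarrow> \<exists>y\<in>Y - X. insert y X \<in> I"
  unfolding matroid_def by blast

lemma rank_mono: "matroid E I \<Longrightarrow> X \<subseteq> Y \<Longrightarrow> rank I X \<le> rank I Y"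
  by (metis order_trans rank_props)

lemma rank_le_card: "matroid E I \<Longrightarrow> finite X \<Longrightarrow> rank I X \<le> card X"
  by (metis card_mono rank_props(1))

lemma rank_card_indep: assumes "matroid E I" "finite X" "rank I X = card X" shows "X \<in> I"
proof -
  obtain Y where "Y \<subseteq> X" "Y \<in> I" "card Y = rank I X" using rank_props(1)[OF assms(1)] by blast
  then have "Y = X" using assms card_subset_eq by metis
  then show ?thesis using \<open>Y \<in> I\<close> by simp
qed

lemma rank_insert: assumes "matroid E I" shows "rank I (insert x X) \<le> rank I X + 1"
proof -
  obtain Y where Y: "Y \<subseteq> insert x X" "Y \<in> I" "card Y = rank I (insert x X)"
    using rank_props(1)[OF assms] by blast
  have "Y - {x} \<subseteq> X" "Y - {x} \<in> I" using Y matroid_sub[OF assms] by auto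
  then have "card (Y - {x}) \<le> rank I X" using rank_props(2)[OF assms] by blast
  moreover have "card Y \<le> card (Y - {x}) + 1"
    using matroid_fin[OF assms Y(2)] by (cases "x \<in> Y") (auto simp: card_Suc_Diff1)
  ultimately show ?thesis using Y by linarith
qed

lemma extend_indep:
  assumes m: "matroid E I"
  shows "J \<in> I \<Longrightarrow> J \<subseteq> S \<Longrightarrow> \<exists>J'. J \<subseteq> J' \<and> J' \<subseteq> S \<and> J' \<in> I \<and> card J' = rank I S"
proof (induction "rank I S - card J" arbitrary: J rule: less_induct)
  case less
  obtain Y where Y: "Y \<subseteq> S" "Y \<in> I" "card Y = rank I S" using rank_props(1)[OF m] by blast
  have le: "card J \<le> rank I S" using rank_props(2)[OF m] less.prems by blast
  show ?case
  proof (cases "card J = rank I S")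
    case True then show ?thesis using less.prems by blast
  next
    case False
    then have "card J < card Y" using le Y by simp
    then obtain y where y: "y \<in> Y - J" "insert y J \<in> I" using matroid_aug[OF m less.prems(1) Y(2)] by blast
    have "card (insert y J) = card J + 1" using y matroid_fin[OF m less.prems(1)] by (simp add: card_insert_if)
    then have "rank I S - card (insert y J) < rank I S - card J" using False le by simp
    moreover have "insert y J \<subseteq> S" using y Y less.prems by auto
    ultimately obtain J' where "insert y J \<subseteq> J'" "J' \<subseteq> S" "J' \<in> I" "card J' = rank I S"
      using less.hyps[OF _ y(2)] by meson
    then show ?thesis by (intro exI[of _ J']) auto
  qed
qed

lemma rank_submod:
  assumes m: "matroid E I" and XE: "X \<subseteq> E" and YE: "Y \<subseteq> E"
  shows "rank I (X \<union> Y) + rank I (X \<inter> Y) \<le> rank I X + rank I Y"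
proof -
  obtain J where J: "J \<subseteq> X \<inter> Y" "J \<in> I" "card J = rank I (X \<inter> Y)" using rank_props(1)[OF m] by blast
  obtain J' where J': "J \<subseteq> J'" "J' \<subseteq> X \<union> Y" "J' \<in> I" "card J' = rank I (X \<union> Y)"
    using extend_indep[OF m J(2), of "X \<union> Y"] J(1) by blast
  have fJ': "finite J'" using matroid_fin[OF m J'(3)] .
  have a: "card (J' \<inter> X) \<le> rank I X" using rank_props(2)[OF m, of "J' \<inter> X" X] matroid_sub[OF m J'(3), of "J' \<inter> X"] by simp
  have b: "card (J' \<inter> Y) \<le> rank I Y" using rank_props(2)[OF m, of "J' \<inter> Y" Y] matroid_sub[OF m J'(3), of "J' \<inter> Y"] by simp
  have "card (J' \<inter> X) + card (J' \<inter> Y) = card ((J' \<inter> X) \<union> (J' \<inter> Y)) + card ((J' \<inter> X) \<inter> (J' \<inter> Y))"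
    using fJ' by (intro card_Un_Int) auto
  moreover have "(J' \<inter> X) \<union> (J' \<inter> Y) = J'" using J' by auto
  moreover have "card J \<le> card ((J' \<inter> X) \<inter> (J' \<inter> Y))" using J(1) J'(1) fJ' by (intro card_mono) blast+
  ultimately have "card J' + card J \<le> card (J' \<inter> X) + card (J' \<inter> Y)" by simp
  then show ?thesis using a b J(3) J'(4) by linarith
qed


lemma basis_card:
  assumes m: "matroid E I" and b: "basis E I Bs" and X: "X \<in> I" and c: "card X = card Bs"
  shows "basis E I X"
  unfolding basis_def
proof (intro conjI ballI impI)
  show "X \<in> I" by fact
  fix Y assume Y: "Y \<in> I" "X \<subseteq> Y"
  show "Y = X"
  proof (rule ccontr)
    assume "Y \<noteq> X"
    then have "X \<subset> Y" using Y by auto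
    then have "card X < card Y" using matroid_fin[OF m Y(1)] psubset_card_mono by blast
    then have "card Bs < card Y" using c by simp
    then obtain y where y: "y \<in> Y - Bs" "insert y Bs \<in> I"
      using matroid_aug[OF m _ Y(1)] b unfolding basis_def by blast
    then have "insert y Bs = Bs" using b unfolding basis_def by blast
    then show False using y by blast
  qed
qed

lemma indep_E: "matroid E I \<Longrightarrow> X \<in> I \<Longrightarrow> X \<subseteq> E"
  unfolding matroid_def by blast

lemma core:
  assumes m: "matroid E I" and b: "basis E I Bs" and eB: "e \<notin> Bs" and PE: "P \<subseteq> E"
    and eP: "e \<notin> P" and ePI: "insert e P \<in> I"
  shows "\<exists>f\<in>Bs - P. insert f P \<in> I \<and> insert e (Bs - {f}) \<in> I"
proof (rule ccontr)
  assume nf: "\<not> ?thesis"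
  let ?r = "rank I"
  have BsI: "Bs \<in> I" using b unfolding basis_def by blast
  have BsE: "Bs \<subseteq> E" using indep_E[OF m BsI] .
  have fBs: "finite Bs" using matroid_fin[OF m BsI] .
  have eE: "e \<in> E" using indep_E[OF m ePI] by blast
  have PI: "P \<in> I" by (rule matroid_sub[OF m ePI]) blast
  have fP: "finite P" using matroid_fin[OF m PI] .
  have rP: "?r P = card P" using rank_fin_indep[OF fP PI] .
  have reP: "?r (insert e P) = card P + 1" using rank_fin_indep[OF _ ePI] fP eP by simp
  have dich: "?r (insert x X) = ?r X \<or> insert x X \<in> I" if "X \<in> I" "x \<notin> X" for x X
  proof -
    have fX: "finite X" using matroid_fin[OF m that(1)] .
    have "?r X = card X" using rank_fin_indep[OF fX that(1)] .
    moreover have "?r X \<le> ?r (insert x X)" by (rule rank_mono[OF m]) auto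
    moreover have "?r (insert x X) \<le> ?r X + 1" by (rule rank_insert[OF m])
    ultimately have "?r (insert x X) = ?r X \<or> ?r (insert x X) = card (insert x X)"
      using that fX by auto
    then show ?thesis using rank_card_indep[OF m] fX by blast
  qed
  define H where "H = {f \<in> Bs. ?r (insert f P) = ?r P}"
  have HB: "H \<subseteq> Bs" unfolding H_def by blast
  have bad: "?r (insert e (Bs - {g})) = ?r (Bs - {g})" if g: "g \<in> Bs - H" for g
  proof -
    have "g \<notin> P"
    proof
      assume "g \<in> P" then have "insert g P = P" by (rule insert_absorb)
      then show False using g unfolding H_def by simp
    qed
    have "insert g P \<in> I" using dich[OF PI \<open>g \<notin> P\<close>] g unfolding H_def by auto
    then have "insert e (Bs - {g}) \<notin> I" using nf g \<open>g \<notin> P\<close> by (meson DiffI DiffD1)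
    moreover have "Bs - {g} \<in> I" by (rule matroid_sub[OF m BsI]) blast
    moreover have "e \<notin> Bs - {g}" using eB by blast
    ultimately show ?thesis using dich[of "Bs - {g}" e] by blast
  qed
  have r_base: "?r (insert e Bs) = ?r Bs"
  proof -
    have "insert e Bs \<notin> I"
    proof
      assume "insert e Bs \<in> I"
      then have "insert e Bs = Bs" using b unfolding basis_def by (meson subset_insertI)
      then show False using eB by blast
    qed
    then show ?thesis using dich[OF BsI eB] by blast
  qed
  have inter: "?r (insert e (Bs - G)) = ?r (Bs - G)" if "G \<subseteq> Bs - H" for G
  proof -
    have "finite G" by (rule finite_subset[OF that]) (use fBs in simp)
    then show ?thesis using that
    proof (induction G rule: finite_induct)
      case empty then show ?case using r_base by simp
    next
      case (insert g G)
      let ?X = "Bs - G" and ?Y = "Bs - {g}"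
      have XI: "?X \<in> I" "?Y \<in> I" by (rule matroid_sub[OF m BsI]; blast)+
      have fX: "finite ?X" "finite ?Y" using fBs by auto
      have "G \<subseteq> Bs - H" using insert.prems by blast
      then have hX0: "?r (insert e ?X) = ?r ?X" by (rule insert.IH)
      have hX: "?r (insert e ?X) = card ?X" using hX0 rank_fin_indep[OF fX(1) XI(1)] by linarith
      have "g \<in> Bs - H" using insert.prems by blast
      then have hY0: "?r (insert e ?Y) = ?r ?Y" by (rule bad)
      have hY: "?r (insert e ?Y) = card ?Y" using hY0 rank_fin_indep[OF fX(2) XI(2)] by linarith
      have sub: "?r (insert e ?X \<union> insert e ?Y) + ?r (insert e ?X \<inter> insert e ?Y)
          \<le> ?r (insert e ?X) + ?r (insert e ?Y)"
        by (rule rank_submod[OF m]) (use BsE eE in auto)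
      have U: "insert e ?X \<union> insert e ?Y = insert e (?X \<union> ?Y)" by auto
      have In: "insert e ?X \<inter> insert e ?Y = insert e (Bs - insert g G)" by auto
      have XY: "?X \<union> ?Y \<in> I" by (rule matroid_sub[OF m BsI]) blast
      have "card (?X \<union> ?Y) = ?r (?X \<union> ?Y)" using rank_fin_indep[OF _ XY] fBs by simp
      also have "\<dots> \<le> ?r (insert e (?X \<union> ?Y))" by (rule rank_mono[OF m]) auto
      finally have c1: "card (?X \<union> ?Y) \<le> ?r (insert e (?X \<union> ?Y))" .
      have c2: "card ?X + card ?Y = card (?X \<union> ?Y) + card (?X \<inter> ?Y)"
        using fX by (rule card_Un_Int)
      have XYi: "?X \<inter> ?Y = Bs - insert g G" by auto
      have Ii: "Bs - insert g G \<in> I" by (rule matroid_sub[OF m BsI]) blast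
      have c3: "?r (Bs - insert g G) = card (Bs - insert g G)" using rank_fin_indep[OF _ Ii] fBs by simp
      have c4: "?r (Bs - insert g G) \<le> ?r (insert e (Bs - insert g G))" by (rule rank_mono[OF m]) auto
      have sub': "?r (insert e (?X \<union> ?Y)) + ?r (insert e (Bs - insert g G)) \<le> card ?X + card ?Y"
        using sub unfolding U In hX hY .
      have c2': "card ?X + card ?Y = card (?X \<union> ?Y) + card (Bs - insert g G)"
        using c2 unfolding XYi .
      show ?case using sub' c1 c2' c3 c4 by linarith
    qed
  qed
  have "Bs - (Bs - H) = H" using HB by blast
  then have reH: "?r (insert e H) = ?r H" using inter[of "Bs - H"] by simp
  have PH: "?r (P \<union> G) = ?r P" if "G \<subseteq> H" for G
  proof -
    have "finite G" using that HB fBs by (meson finite_subset)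
    then show ?thesis using that
    proof (induction G rule: finite_induct)
      case empty then show ?case by simp
    next
      case (insert h G)
      have hP: "?r (insert h P) = ?r P" using insert unfolding H_def by blast
      have hE: "h \<in> E" using insert HB BsE by blast
      have GE: "G \<subseteq> E" using insert HB BsE by blast
      have sub: "?r ((P \<union> G) \<union> insert h P) + ?r ((P \<union> G) \<inter> insert h P) \<le> ?r (P \<union> G) + ?r (insert h P)"
        by (rule rank_submod[OF m]) (use PE GE hE in auto)
      have "?r P \<le> ?r ((P \<union> G) \<inter> insert h P)" by (rule rank_mono[OF m]) auto
      moreover have "(P \<union> G) \<union> insert h P = P \<union> insert h G" by auto
      ultimately have "?r (P \<union> insert h G) \<le> ?r P" using sub insert hP by simp
      moreover have "?r P \<le> ?r (P \<union> insert h G)" by (rule rank_mono[OF m]) auto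
      ultimately show ?case by simp
    qed
  qed
  have HE: "H \<subseteq> E" using HB BsE by blast
  have sub2: "?r (insert e H \<union> (P \<union> H)) + ?r (insert e H \<inter> (P \<union> H)) \<le> ?r (insert e H) + ?r (P \<union> H)"
    by (rule rank_submod[OF m]) (use PE HE eE in auto)
  have "?r H \<le> ?r (insert e H \<inter> (P \<union> H))" by (rule rank_mono[OF m]) auto
  moreover have "insert e H \<union> (P \<union> H) = insert e (P \<union> H)" by auto
  ultimately have "?r (insert e (P \<union> H)) \<le> ?r P" using sub2 reH PH[OF order_refl] by simp
  moreover have "?r (insert e P) \<le> ?r (insert e (P \<union> H))" by (rule rank_mono[OF m]) auto
  ultimately show False using rP reP by simp
qed



lemma ua_bdd: "uncertainty_area S \<Longrightarrow> bdd_above S"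
proof -
  assume "uncertainty_area S"
  then obtain F where F: "finite F" "S = \<Union>F" "\<forall>J \<in> F. \<exists>a b. J = {a..b} \<or> J = {a<..<b}"
    unfolding uncertainty_area_def by blast
  have "\<forall>J\<in>F. bdd_above J" using F(3) by fastforce
  then have "bdd_above (\<Union>F)" using bdd_above_UN[OF F(1), of "\<lambda>J. J"] by simp
  then show ?thesis using F(2) by simp
qed

lemma sum_upd: fixes g :: "'a \<Rightarrow> real" shows "finite X \<Longrightarrow> sum (g(x := v)) X = sum g X + (if x \<in> X then v - g x else 0)"
proof (cases "x \<in> X")
  case True
  assume f: "finite X"
  have "sum (g(x := v)) X = (g(x := v)) x + sum (g(x := v)) (X - {x})" by (rule sum.remove[OF f True])
  also have "sum (g(x := v)) (X - {x}) = sum g (X - {x})" by (rule sum.cong) auto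
  also have "sum g X = g x + sum g (X - {x})" by (rule sum.remove[OF f True])
  ultimately show ?thesis using True by simp
next
  case False
  then show ?thesis by (auto intro: sum.cong)
qed


theorem lemma17:
  fixes E :: "'a set" and I :: "'a set set" and A :: "'a \<Rightarrow> real set"
    and w c :: "'a \<Rightarrow> real" and D K B :: "'a set" and e :: 'a
  assumes wum: "weighted_uncertainty_matroid E I A w c"
    and comp: "compatible_minor E I A w c D K"
    and e_in: "e \<in> minor_ground E D K"
    and e_nontriv: "\<not> trivial A w e"
    and B_mwb: "is_MWB (minor_ground E D K) (minor_indep E I D K) w B"
    and e_B: "e \<in> B"
    and w_up: "w e = upper A e"
    and min_w: "\<forall>f \<in> minor_ground E D K - matroid_span (minor_ground E D K) (minor_indep E I D K) (B - {e}).
                   w e \<le> w f"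
    and max_c: "\<forall>f \<in> (minor_ground E D K - matroid_span (minor_ground E D K) (minor_indep E I D K) (B - {e}))
                        \<inter> EU E A w (w e). c f \<le> c e"
  shows "compatible_minor E I A w c D (K \<union> {e})"
proof -
  have m: "matroid E I" and wE: "\<forall>g\<in>E. uncertainty_area (A g) \<and> w g \<in> A g \<and> c g \<ge> 0"
    using wum unfolding weighted_uncertainty_matroid_def by auto
  have fE: "finite E" using m unfolding matroid_def by blast
  obtain Qs Bs where DE: "D \<subseteq> E" and KE: "K \<subseteq> E" and QsE: "Qs \<subseteq> E"
    and Qopt: "sum c Qs = opt_cost E I A w c" and Qver: "verifies E I A w Qs Bs"
    and BsM: "is_MWB E I w Bs" and KB: "K \<subseteq> Bs" and DB: "D \<inter> Bs = {}"
    using comp unfolding compatible_minor_def by blast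
  have eE: "e \<in> E" "e \<notin> D" "e \<notin> K" using e_in unfolding minor_ground_def by auto
  show ?thesis
  proof (cases "e \<in> Bs")
    case True
    then show ?thesis unfolding compatible_minor_def using DE KE eE QsE Qopt Qver BsM KB DB by blast
  next
    case False
    note eB = False
    have Bsb: "basis E I Bs" using BsM unfolding is_MWB_def by blast
    have BsI: "Bs \<in> I" using Bsb unfolding basis_def by blast
    have BsE: "Bs \<subseteq> E" by (rule indep_E[OF m BsI])
    have fBs: "finite Bs" by (rule matroid_fin[OF m BsI])
    have KI: "K \<in> I" by (rule matroid_sub[OF m BsI KB])
    have fK: "finite K" by (rule matroid_fin[OF m KI])
    have rK: "rank I K = card K" by (rule rank_fin_indep[OF fK KI])
    have Bmin: "B \<in> minor_indep E I D K" using B_mwb unfolding is_MWB_def basis_def by blast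
    have BG: "B \<subseteq> E - (D \<union> K)" and rB: "rank I (B \<union> K) = card B + rank I K"
      using Bmin unfolding minor_indep_def by auto
    have fB: "finite B" using BG fE finite_subset by blast
    have BKd: "B \<inter> K = {}" using BG by blast
    have cBK: "card (B \<union> K) = card B + card K" using card_Un_disjoint[OF fB fK BKd] .
    have BKI: "B \<union> K \<in> I" by (rule rank_card_indep[OF m]) (use fB fK rB rK cBK in auto)
    define P where "P = (B - {e}) \<union> K"
    have eP: "e \<notin> P" unfolding P_def using eE by blast
    have ePI: "insert e P \<in> I" unfolding P_def using BKI e_B
      by (metis Un_insert_left insert_Diff)
    have PE: "P \<subseteq> E" unfolding P_def using BG KE by blast
    obtain f where fBs': "f \<in> Bs" "f \<notin> P" and fPI: "insert f P \<in> I"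
      and B'I: "insert e (Bs - {f}) \<in> I"
      using core[OF m Bsb eB PE eP ePI] by blast
    define B' where "B' = insert e (Bs - {f})"
    have cpos: "card Bs > 0" using fBs fBs'(1) card_gt_0_iff by blast
    have cB': "card B' = card Bs" unfolding B'_def using fBs fBs' eB cpos
      by (simp add: card_insert_if)
    have B'b: "basis E I B'" using basis_card[OF m Bsb _ cB'] B'I unfolding B'_def by blast
    have fne: "f \<noteq> e" using fBs' eB by blast
    have fE': "f \<in> E" "f \<notin> D" "f \<notin> K" using fBs' BsE DB unfolding P_def by auto
    have fG: "f \<in> minor_ground E D K" unfolding minor_ground_def using fE' by blast
    have PI: "P \<in> I" by (rule matroid_sub[OF m ePI]) blast
    have fP: "finite P" by (rule matroid_fin[OF m PI])
    have fBe: "finite (B - {e})" using fB by simp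
    have cP: "card P = card (B - {e}) + card K" unfolding P_def
      by (rule card_Un_disjoint) (use fB fK BKd in auto)
    have Be_in: "B - {e} \<in> minor_indep E I D K" unfolding minor_indep_def
      using BG rank_fin_indep[OF fP PI] cP rK unfolding P_def by auto
    have fBe': "f \<notin> B - {e}" using fBs' unfolding P_def by blast
    have cfB: "card (insert f (B - {e})) = card (B - {e}) + 1" using fBe fBe' by simp
    have fPc: "card (insert f P) = card P + 1" using fP fBs' by simp
    have iP: "insert f (B - {e}) \<union> K = insert f P" unfolding P_def by blast
    have Bf_in: "insert f (B - {e}) \<in> minor_indep E I D K" unfolding minor_indep_def
      using BG fG rank_fin_indep[OF _ fPI] fP cP rK cfB fPc iP unfolding minor_ground_def by auto
    have r1: "rank (minor_indep E I D K) (B - {e}) = card (B - {e})"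
      by (rule rank_fin_indep[OF fBe Be_in])
    have r2: "rank (minor_indep E I D K) (insert f (B - {e})) = card (B - {e}) + 1"
      using rank_fin_indep[OF _ Bf_in] fBe cfB by simp
    have fnspan: "f \<notin> matroid_span (minor_ground E D K) (minor_indep E I D K) (B - {e})"
      unfolding matroid_span_def using r1 r2 by auto
    have wef: "w e \<le> w f" using min_w fG fnspan by blast
    have sumB': "sum g B' = sum g Bs - g f + g e" for g :: "'a \<Rightarrow> real"
    proof -
      have "sum g B' = g e + sum g (Bs - {f})" unfolding B'_def using fBs eB by simp
      moreover have "sum g Bs = g f + sum g (Bs - {f})" by (rule sum.remove[OF fBs fBs'(1)])
      ultimately show ?thesis by simp
    qed
    have "sum w Bs \<le> sum w B'" using BsM B'b unfolding is_MWB_def by blast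
    then have wfe: "w f = w e" using sumB'[of w] wef by simp
    have bdd: "bdd_above (A g)" if "g \<in> E" for g using wE that by (intro ua_bdd) blast
    have wA: "w g \<in> A g" if "g \<in> E" for g using wE that by blast
    have wa_w: "weight_assignment E A w" unfolding weight_assignment_def using wA by blast
    have cons_w: "consistent w Q w" for Q unfolding consistent_def by blast
    have le_up: "v \<le> w g" if "g \<in> E" "v \<in> A g" "w g = upper A g" for g v
      using cSup_upper[OF that(2) bdd[OF that(1)]] that(3) unfolding upper_def by simp
    have eQ: "e \<in> Qs"
    proof (rule ccontr)
      assume eQ: "e \<notin> Qs"
      obtain x where x: "x \<in> A e" "x \<noteq> w e"
        using e_nontriv wA[OF eE(1)] unfolding trivial_def by blast
      have xl: "x < w e" using le_up[OF eE(1) x(1) w_up] x(2) by simp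
      define w' where "w' = w(e := x)"
      have "weight_assignment E A w'" unfolding weight_assignment_def w'_def using wA x by auto
      moreover have "consistent w Qs w'" unfolding consistent_def w'_def using eQ by auto
      ultimately have "is_MWB E I w' Bs" using Qver unfolding verifies_def by blast
      then have "sum w' Bs \<le> sum w' B'" using B'b unfolding is_MWB_def by blast
      moreover have "sum w' Bs = sum w Bs" unfolding w'_def using sum_upd[OF fBs] eB by simp
      moreover have "w' f = w f" "w' e = x" unfolding w'_def using fne by auto
      ultimately show False using sumB'[of w'] xl wfe by simp
    qed
    show ?thesis
    proof (cases "f \<in> Qs \<or> trivial A w f")
      case True
      have ver: "verifies E I A w Qs B'" unfolding verifies_def
      proof (intro allI impI)
        fix w' assume w': "weight_assignment E A w' \<and> consistent w Qs w'"
        then have M: "is_MWB E I w' Bs" using Qver unfolding verifies_def by blast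
        have we: "w' e = w e" using w' eQ unfolding consistent_def by blast
        have wf: "w' f = w f" using True w' fE'(1) unfolding consistent_def weight_assignment_def trivial_def
          by auto
        have "sum w' B' = sum w' Bs" using sumB'[of w'] we wf wfe by simp
        then show "is_MWB E I w' B'" using M B'b unfolding is_MWB_def by simp
      qed
      have "is_MWB E I w B'" using ver wa_w cons_w unfolding verifies_def by blast
      moreover have "K \<union> {e} \<subseteq> B'" "D \<inter> B' = {}" unfolding B'_def using KB fE' DB eE by auto
      ultimately show ?thesis unfolding compatible_minor_def using DE KE eE QsE Qopt ver by blast
    next
      case False
      then have fQ: "f \<notin> Qs" and fnt: "\<not> trivial A w f" by auto
      have upf: "upper A f = w e"
      proof (rule antisym)
        show "w e \<le> upper A f" using cSup_upper[OF wA[OF fE'(1)] bdd[OF fE'(1)]] wfe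
          unfolding upper_def by simp
        show "upper A f \<le> w e"
        proof (rule ccontr)
          assume "\<not> upper A f \<le> w e"
          then have "w e < Sup (A f)" unfolding upper_def by simp
          then obtain y where y: "y \<in> A f" "w e < y"
            using less_cSupE[of "w e" "A f"] wA[OF fE'(1)] by blast
          define w' where "w' = w(f := y)"
          have "weight_assignment E A w'" unfolding weight_assignment_def w'_def using wA y by auto
          moreover have "consistent w Qs w'" unfolding consistent_def w'_def using fQ by auto
          ultimately have "is_MWB E I w' Bs" using Qver unfolding verifies_def by blast
          then have "sum w' Bs \<le> sum w' B'" using B'b unfolding is_MWB_def by blast
          moreover have "sum w' Bs = sum w Bs + (y - w f)" unfolding w'_def using sum_upd[OF fBs] fBs' by simp
          moreover have "w' f = y" "w' e = w e" unfolding w'_def using fne by auto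
          ultimately show False using sumB'[of w'] y wfe by simp
        qed
      qed
      have fEU: "f \<in> EU E A w (w e)" unfolding EU_def using fE' upf fnt by blast
      have cfe: "c f \<le> c e" using max_c fG fnspan fEU by blast
      define Q' where "Q' = insert f (Qs - {e})"
      have Q'E: "Q' \<subseteq> E" unfolding Q'_def using QsE fE' by blast
      have ver: "verifies E I A w Q' B'" unfolding verifies_def
      proof (intro allI impI)
        fix w' assume w': "weight_assignment E A w' \<and> consistent w Q' w'"
        define w'' where "w'' = w'(e := w e)"
        have "weight_assignment E A w''" unfolding weight_assignment_def w''_def
          using w' wA unfolding weight_assignment_def by auto
        moreover have "consistent w Qs w''" unfolding consistent_def w''_def
          using w' unfolding consistent_def Q'_def by auto
        ultimately have M: "is_MWB E I w'' Bs" using Qver unfolding verifies_def by blast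
        have w''f: "w'' f = w f" using w' fne unfolding w''_def consistent_def Q'_def by auto
        have w''e: "w'' e = w e" unfolding w''_def by simp
        have eqs: "sum w'' B' = sum w'' Bs" using sumB'[of w''] w''f w''e wfe by simp
        have we': "w' e \<le> w e" using le_up[OF eE(1) _ w_up] w' unfolding weight_assignment_def using eE by blast
        have fB'': "finite B'" unfolding B'_def using fBs by simp
        have eB': "e \<in> B'" unfolding B'_def by simp
        have s1: "sum w'' B' = sum w' B' + (w e - w' e)" unfolding w''_def using sum_upd[OF fB''] eB' by simp
        show "is_MWB E I w' B'" unfolding is_MWB_def
        proof (intro conjI allI impI)
          show "basis E I B'" by fact
          fix X assume X: "basis E I X"
          have fX: "finite X" using X matroid_fin[OF m] unfolding basis_def by blast
          have "sum w'' Bs \<le> sum w'' X" using M X unfolding is_MWB_def by blast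
          moreover have "sum w'' X \<le> sum w' X + (w e - w' e)" unfolding w''_def using sum_upd[OF fX] we' by simp
          ultimately show "sum w' B' \<le> sum w' X" using eqs s1 by simp
        qed
      qed
      have cert: "certificate E I A w Q'" unfolding certificate_def using Q'E ver by blast
      have fQs: "finite Qs" using QsE fE finite_subset by blast
      have "sum c Q' = c f + sum c (Qs - {e})" unfolding Q'_def using fQs fQ by simp
      moreover have "sum c Qs = c e + sum c (Qs - {e})" by (rule sum.remove[OF fQs eQ])
      ultimately have le1: "sum c Q' \<le> opt_cost E I A w c" using Qopt cfe by simp
      have finS: "finite {sum c Q | Q. certificate E I A w Q}"
        by (rule finite_subset[of _ "sum c ` Pow E"]) (use fE in \<open>auto simp: certificate_def\<close>)
      have "opt_cost E I A w c \<le> sum c Q'" unfolding opt_cost_def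
        by (rule Min_le[OF finS]) (use cert in blast)
      then have Qopt': "sum c Q' = opt_cost E I A w c" using le1 by simp
      have "is_MWB E I w B'" using ver wa_w cons_w unfolding verifies_def by blast
      moreover have "K \<union> {e} \<subseteq> B'" "D \<inter> B' = {}" unfolding B'_def using KB fE' DB eE by auto
      ultimately show ?thesis unfolding compatible_minor_def using DE KE eE Q'E Qopt' ver by blast
    qed
  qed
qed

end
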